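(* Let $A$ be a finite set and let $(v_{xy})$ be a Llull matrix on $A$ with CLC structure that is not identically zero. Then $A$ has a top dominant irreducible component $X$ (for $(v_{xy})$), and moreover $v_{xy}>0$ for every $x\in X$ and every $y\in A$ with $y\neq x$.
   Context: A Llull matrix on a finite set $A$ is an assignment to each ordered pair of distinct elements $x\neq y$ of $A$ of a number $v_{xy}\in[0,1]$ such that $v_{xy}+v_{yx}\le 1$. Turnouts: $t_{xy}=v_{xy}+v_{yx}$; margins: $m_{xy}=v_{xy}-v_{yx}$. The matrix has CLC structure if there is a total order $\xi$ on $A$ such that, writing $x<_\xi y$ when $x$ precedes $y$ and $x'$ for the immediate successor of $x$ in $\xi$ (when it exists): (i) $v_{xy}\ge v_{yx}$ whenever $x<_\xi y$; (ii) $v_{xz}=\max(v_{xy},v_{yz})$ whenever $x<_\xi y<_\xi z$; (iii) $v_{zx}=\min(v_{zy},v_{yx})$ whenever $x<_\xi y<_\xi z$; (iv) $0\le t_{xz}-t_{x'z}\le m_{xx'}$ whenever $x'$ exists and $z\notin\{x,x'\}$. Indirect scores: for $x\neq y$, $\hat v_{xy}=\max$ over all paths $x=x_0,x_1,\dots,x_n=y$ of elements of $A$ (consecutive elements distinct) of $\min_{0\le i<n} v_{x_ix_{i+1}}$. Write $x\sim y$ iff $x=y$ or ($\hat v_{xy}>0$ and $\hat v_{yx}>0$); this is an equivalence relation whose classes are the irreducible components of $A$. Say $x$ dominates $y$ iff $\hat v_{xy}>0$ and $\hat v_{yx}=0$; this relation is compatible with $\sim$, so an irreducible component $C$ dominates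 a component $D$ iff some (equivalently every) $x\in C$ dominates some (equivalently every) $y\in D$. A top dominant irreducible component is an irreducible component that dominates every other irreducible component. *)

theory Defs
  imports Complex_Main
begin

text \<open>A Llull matrix on a finite set A: the function v, restricted to ordered pairs of
distinct elements of A.\<close>
definition llull_matrix :: "'a set \<Rightarrow> ('a \<Rightarrow> 'a \<Rightarrow> real) \<Rightarrow> bool" where
  "llull_matrix A v \<longleftrightarrow> (\<forall>x\<in>A. \<forall>y\<in>A. x \<noteq> y \<longrightarrow>
      0 \<le> v x y \<and> v x y \<le> 1 \<and> v x y + v y x \<le> 1)"

definition turnout :: "('a \<Rightarrow> 'a \<Rightarrow> real) \<Rightarrow> 'a \<Rightarrow> 'a \<Rightarrow> real" where
  "turnout v x y = v x y + v y x"

definition margin :: "('a \<Rightarrow> 'a \<Rightarrow> real) \<Rightarrow> 'a \<Rightarrow> 'a \<Rightarrow> real" where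
  "margin v x y = v x y - v y x"

text \<open>A total order \<xi> on the finite set A is represented by the list xs enumerating A
in \<xi>-order: x precedes y iff x occurs at a smaller index; the immediate successor of
xs!i is xs!(i+1).\<close>
definition clc_order :: "'a set \<Rightarrow> ('a \<Rightarrow> 'a \<Rightarrow> real) \<Rightarrow> 'a list \<Rightarrow> bool" where
  "clc_order A v xs \<longleftrightarrow> distinct xs \<and> set xs = A \<and>
     (\<forall>i j. i < j \<and> j < length xs \<longrightarrow> v (xs!i) (xs!j) \<ge> v (xs!j) (xs!i)) \<and>
     (\<forall>i j k. i < j \<and> j < k \<and> k < length xs \<longrightarrow>
        v (xs!i) (xs!k) = max (v (xs!i) (xs!j)) (v (xs!j) (xs!k))) \<and>
     (\<forall>i j k. i < j \<and> j < k \<and> k < length xs \<longrightarrow>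
        v (xs!k) (xs!i) = min (v (xs!k) (xs!j)) (v (xs!j) (xs!i))) \<and>
     (\<forall>i z. Suc i < length xs \<and> z \<in> A \<and> z \<noteq> xs!i \<and> z \<noteq> xs!Suc i \<longrightarrow>
        0 \<le> turnout v (xs!i) z - turnout v (xs!Suc i) z \<and>
        turnout v (xs!i) z - turnout v (xs!Suc i) z \<le> margin v (xs!i) (xs!Suc i))"

definition has_CLC :: "'a set \<Rightarrow> ('a \<Rightarrow> 'a \<Rightarrow> real) \<Rightarrow> bool" where
  "has_CLC A v \<longleftrightarrow> (\<exists>xs. clc_order A v xs)"

definition is_path :: "'a set \<Rightarrow> 'a \<Rightarrow> 'a \<Rightarrow> 'a list \<Rightarrow> bool" where
  "is_path A x y ps \<longleftrightarrow> length ps \<ge> 2 \<and> set ps \<subseteq> A \<and> hd ps = x \<and> last ps = y \<and>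
     (\<forall>i. Suc i < length ps \<longrightarrow> ps!i \<noteq> ps!Suc i)"

definition path_value :: "('a \<Rightarrow> 'a \<Rightarrow> real) \<Rightarrow> 'a list \<Rightarrow> real" where
  "path_value v ps = Min ((\<lambda>i. v (ps!i) (ps!Suc i)) ` {..<length ps - 1})"

text \<open>Indirect score: maximum over all paths (the set of path values is finite,
being contained in the finite set of entries of v on A).\<close>
definition indirect :: "'a set \<Rightarrow> ('a \<Rightarrow> 'a \<Rightarrow> real) \<Rightarrow> 'a \<Rightarrow> 'a \<Rightarrow> real" where
  "indirect A v x y = Max {path_value v ps | ps. is_path A x y ps}"

definition irr_equiv :: "'a set \<Rightarrow> ('a \<Rightarrow> 'a \<Rightarrow> real) \<Rightarrow> 'a \<Rightarrow> 'a \<Rightarrow> bool" where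
  "irr_equiv A v x y \<longleftrightarrow> x = y \<or> (indirect A v x y > 0 \<and> indirect A v y x > 0)"

definition dominates :: "'a set \<Rightarrow> ('a \<Rightarrow> 'a \<Rightarrow> real) \<Rightarrow> 'a \<Rightarrow> 'a \<Rightarrow> bool" where
  "dominates A v x y \<longleftrightarrow> indirect A v x y > 0 \<and> indirect A v y x = 0"

definition irr_component :: "'a set \<Rightarrow> ('a \<Rightarrow> 'a \<Rightarrow> real) \<Rightarrow> 'a set \<Rightarrow> bool" where
  "irr_component A v C \<longleftrightarrow> (\<exists>x\<in>A. C = {y\<in>A. irr_equiv A v x y})"

definition comp_dominates :: "'a set \<Rightarrow> ('a \<Rightarrow> 'a \<Rightarrow> real) \<Rightarrow> 'a set \<Rightarrow> 'a set \<Rightarrow> bool" where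
  "comp_dominates A v C D \<longleftrightarrow> (\<exists>x\<in>C. \<exists>y\<in>D. dominates A v x y)"

definition top_dominant_component :: "'a set \<Rightarrow> ('a \<Rightarrow> 'a \<Rightarrow> real) \<Rightarrow> 'a set \<Rightarrow> bool" where
  "top_dominant_component A v X \<longleftrightarrow> irr_component A v X \<and>
     (\<forall>D. irr_component A v D \<and> D \<noteq> X \<longrightarrow> comp_dominates A v X D)"

end

theory Submission
  imports Defs
begin

lemma path_value_in:
  assumes "is_path A x y ps"
  shows "path_value v ps \<in> (\<lambda>i. v (ps!i) (ps!Suc i)) ` {..<length ps - 1}"
proof -
  have "0 \<in> {..<length ps - 1}" using assms by (auto simp: is_path_def)
  hence "{..<length ps - 1} \<noteq> {}" by blast
  then show ?thesis unfolding path_value_def by (intro Min_in) auto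
qed

lemma path_value_le:
  assumes "is_path A x y ps" "Suc i < length ps"
  shows "path_value v ps \<le> v (ps!i) (ps!Suc i)"
  unfolding path_value_def using assms by (intro Min_le) auto

lemma path_value_nonneg:
  assumes "llull_matrix A v" "is_path A x y ps"
  shows "0 \<le> path_value v ps"
proof -
  from path_value_in[OF assms(2), of v] obtain i where i: "i < length ps - 1"
    and eq: "path_value v ps = v (ps!i) (ps!Suc i)" by auto
  have "ps!i \<in> A" "ps!Suc i \<in> A" "ps!i \<noteq> ps!Suc i"
    using assms(2) i by (auto simp: is_path_def)
  then show ?thesis using assms(1) eq by (auto simp: llull_matrix_def)
qed

lemma path_set_finite:
  assumes "finite A"
  shows "finite {path_value v ps | ps. is_path A x y ps}"
proof -
  have "{path_value v ps | ps. is_path A x y ps} \<subseteq> (\<lambda>(a,b). v a b) ` (A \<times> A)"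
  proof
    fix r assume "r \<in> {path_value v ps | ps. is_path A x y ps}"
    then obtain ps where p: "is_path A x y ps" and r: "r = path_value v ps" by auto
    from path_value_in[OF p, of v] obtain i where i: "i < length ps - 1"
      and eq: "path_value v ps = v (ps!i) (ps!Suc i)" by auto
    have "ps!i \<in> A" "ps!Suc i \<in> A" using p i by (auto simp: is_path_def)
    then show "r \<in> (\<lambda>(a,b). v a b) ` (A \<times> A)" using r eq by force
  qed
  moreover have "finite ((\<lambda>(a,b). v a b) ` (A \<times> A))" using assms by auto
  ultimately show ?thesis by (rule finite_subset)
qed

lemma path2: "x \<in> A \<Longrightarrow> y \<in> A \<Longrightarrow> x \<noteq> y \<Longrightarrow> is_path A x y [x,y]"
  unfolding is_path_def by (auto simp: less_Suc_eq)

lemma path2_value: "path_value v [x,y] = v x y"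
  unfolding path_value_def by (simp add: lessThan_Suc)

lemma indirect_ge:
  assumes "finite A" "x \<in> A" "y \<in> A" "x \<noteq> y"
  shows "v x y \<le> indirect A v x y"
  unfolding indirect_def
  apply (rule Max_ge[OF path_set_finite[OF assms(1)]])
  using path2[OF assms(2-4)] path2_value[of v x y] by force

lemma indirect_zero:
  assumes "finite A" "llull_matrix A v" "x \<in> A" "y \<in> A" "x \<noteq> y"
    and "\<And>ps. is_path A x y ps \<Longrightarrow> path_value v ps \<le> 0"
  shows "indirect A v x y = 0"
  unfolding indirect_def
proof (rule Max_eqI[OF path_set_finite[OF assms(1)]])
  fix r assume "r \<in> {path_value v ps | ps. is_path A x y ps}"
  then show "r \<le> 0" using assms(6) by auto
next
  have p: "is_path A x y [x,y]" using path2[OF assms(3-5)] .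
  have "path_value v [x,y] = 0" using assms(6)[OF p] path_value_nonneg[OF assms(2) p] by simp
  then show "0 \<in> {path_value v ps | ps. is_path A x y ps}" using p by force
qed

lemma cross:
  "ps \<noteq> [] \<Longrightarrow> P (hd ps) \<Longrightarrow> \<not> P (last ps) \<Longrightarrow>
   \<exists>i. Suc i < length ps \<and> P (ps!i) \<and> \<not> P (ps!Suc i)"
proof (induction ps)
  case Nil then show ?case by simp
next
  case (Cons a ps)
  show ?case
  proof (cases "ps = []")
    case True then show ?thesis using Cons by simp
  next
    case False
    show ?thesis
    proof (cases "P (hd ps)")
      case True
      then obtain i where "Suc i < length ps \<and> P (ps!i) \<and> \<not> P (ps!Suc i)"
        using Cons False by auto
      then show ?thesis by (intro exI[of _ "Suc i"]) auto
    next
      case f: False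
      then show ?thesis using Cons False by (intro exI[of _ 0]) (auto simp: hd_conv_nth)
    qed
  qed
qed


locale clc_setup =
  fixes A :: "'a set" and v :: "'a \<Rightarrow> 'a \<Rightarrow> real" and xs :: "'a list"
  assumes fin: "finite A" and ll: "llull_matrix A v" and co: "clc_order A v xs"
begin

abbreviation "n \<equiv> length xs"

lemma dist: "distinct xs" and setxs: "set xs = A" using co by (auto simp: clc_order_def)

lemma cop: "distinct xs \<and> set xs = A \<and>
     (\<forall>i j. i < j \<and> j < length xs \<longrightarrow> v (xs!i) (xs!j) \<ge> v (xs!j) (xs!i)) \<and>
     (\<forall>i j k. i < j \<and> j < k \<and> k < length xs \<longrightarrow>
        v (xs!i) (xs!k) = max (v (xs!i) (xs!j)) (v (xs!j) (xs!k))) \<and>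
     (\<forall>i j k. i < j \<and> j < k \<and> k < length xs \<longrightarrow>
        v (xs!k) (xs!i) = min (v (xs!k) (xs!j)) (v (xs!j) (xs!i))) \<and>
     (\<forall>i z. Suc i < length xs \<and> z \<in> A \<and> z \<noteq> xs!i \<and> z \<noteq> xs!Suc i \<longrightarrow>
        0 \<le> turnout v (xs!i) z - turnout v (xs!Suc i) z \<and>
        turnout v (xs!i) z - turnout v (xs!Suc i) z \<le> margin v (xs!i) (xs!Suc i))"
  using co unfolding clc_order_def .

lemma c1: "i < j \<Longrightarrow> j < n \<Longrightarrow> v (xs!j) (xs!i) \<le> v (xs!i) (xs!j)"
  using cop[THEN conjunct2, THEN conjunct2, THEN conjunct1] by blast

lemma c2: "i < j \<Longrightarrow> j < k \<Longrightarrow> k < n \<Longrightarrow> v (xs!i) (xs!k) = max (v (xs!i) (xs!j)) (v (xs!j) (xs!k))"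
  using cop[THEN conjunct2, THEN conjunct2, THEN conjunct2, THEN conjunct1] by blast

lemma c3: "i < j \<Longrightarrow> j < k \<Longrightarrow> k < n \<Longrightarrow> v (xs!k) (xs!i) = min (v (xs!k) (xs!j)) (v (xs!j) (xs!i))"
  using cop[THEN conjunct2, THEN conjunct2, THEN conjunct2, THEN conjunct2, THEN conjunct1] by blast

lemma c4: "Suc i < n \<Longrightarrow> z \<in> A \<Longrightarrow> z \<noteq> xs!i \<Longrightarrow> z \<noteq> xs!Suc i \<Longrightarrow>
        0 \<le> turnout v (xs!i) z - turnout v (xs!Suc i) z \<and>
        turnout v (xs!i) z - turnout v (xs!Suc i) z \<le> margin v (xs!i) (xs!Suc i)"
  using cop[THEN conjunct2, THEN conjunct2, THEN conjunct2, THEN conjunct2, THEN conjunct2] by blast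

lemma idx_eq: "i < n \<Longrightarrow> j < n \<Longrightarrow> xs!i = xs!j \<longleftrightarrow> i = j"
  using dist by (simp add: nth_eq_iff_index_eq)

lemma inA: "i < n \<Longrightarrow> xs!i \<in> A" using setxs by auto

lemma getidx: "y \<in> A \<Longrightarrow> \<exists>k<n. y = xs!k" using setxs by (auto simp: in_set_conv_nth)

definition idx :: "'a \<Rightarrow> nat" where "idx w = (THE k. k < n \<and> xs!k = w)"

lemma idx_nth: "k < n \<Longrightarrow> idx (xs!k) = k"
  unfolding idx_def by (rule the_equality) (use idx_eq in auto)

lemma idx_in: "w \<in> A \<Longrightarrow> idx w < n \<and> xs!(idx w) = w"
  using getidx idx_nth by metis

lemma nonneg: "i < n \<Longrightarrow> j < n \<Longrightarrow> i \<noteq> j \<Longrightarrow> 0 \<le> v (xs!i) (xs!j)"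
  using ll idx_eq inA unfolding llull_matrix_def by blast

lemma back_le: assumes "q \<le> l" "l < p" "p < n"
  shows "v (xs!p) (xs!q) \<le> v (xs!Suc l) (xs!l)"
proof -
  have a: "v (xs!p) (xs!q) \<le> v (xs!p) (xs!l)"
  proof (cases "q = l")
    case False then show ?thesis using c3[of q l p] assms by simp
  qed simp
  have b: "v (xs!p) (xs!l) \<le> v (xs!Suc l) (xs!l)"
  proof (cases "Suc l = p")
    case False then show ?thesis using c3[of l "Suc l" p] assms by simp
  qed simp
  from a b show ?thesis by simp
qed

lemma fwd_ge: assumes "i \<le> l" "l < k" "k < n"
  shows "v (xs!l) (xs!Suc l) \<le> v (xs!i) (xs!k)"
proof -
  have a: "v (xs!l) (xs!k) \<le> v (xs!i) (xs!k)"
  proof (cases "i = l")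
    case False then show ?thesis using c2[of i l k] assms by simp
  qed simp
  have b: "v (xs!l) (xs!Suc l) \<le> v (xs!l) (xs!k)"
  proof (cases "Suc l = k")
    case False then show ?thesis using c2[of l "Suc l" k] assms by simp
  qed simp
  from a b show ?thesis by simp
qed

lemma back_pos: "p < n \<Longrightarrow> q < p \<Longrightarrow> (\<forall>l. q \<le> l \<and> l < p \<longrightarrow> 0 < v (xs!Suc l) (xs!l))
   \<Longrightarrow> 0 < v (xs!p) (xs!q)"
proof (induction p arbitrary: q)
  case 0 then show ?case by simp
next
  case (Suc p)
  show ?case
  proof (cases "q = p")
    case True then show ?thesis using Suc.prems by auto
  next
    case False
    then have "q < p" using Suc.prems by simp
    then have "0 < v (xs!p) (xs!q)" using Suc.IH[of q] Suc.prems by auto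
    moreover have "0 < v (xs!Suc p) (xs!p)" using Suc.prems by auto
    ultimately show ?thesis using c3[of q p "Suc p"] \<open>q < p\<close> Suc.prems by simp
  qed
qed

lemma fwd_zero: "k < n \<Longrightarrow> i < k \<Longrightarrow> (\<forall>l. i \<le> l \<and> l < k \<longrightarrow> v (xs!l) (xs!Suc l) \<le> 0)
   \<Longrightarrow> v (xs!i) (xs!k) \<le> 0"
proof (induction k arbitrary: i)
  case 0 then show ?case by simp
next
  case (Suc k)
  show ?case
  proof (cases "i = k")
    case True then show ?thesis using Suc.prems by auto
  next
    case False
    then have "i < k" using Suc.prems by simp
    then have "v (xs!i) (xs!k) \<le> 0" using Suc.IH[of i] Suc.prems by auto
    moreover have "v (xs!k) (xs!Suc k) \<le> 0" using Suc.prems by auto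
    ultimately show ?thesis using c2[of i k "Suc k"] \<open>i < k\<close> Suc.prems by simp
  qed
qed


lemma main:
  assumes nz: "\<exists>x\<in>A. \<exists>y\<in>A. x \<noteq> y \<and> v x y \<noteq> 0"
  shows "\<exists>X. top_dominant_component A v X \<and> (\<forall>x\<in>X. \<forall>y\<in>A. y \<noteq> x \<longrightarrow> v x y > 0)"
proof -
  define b where "b l = v (xs!Suc l) (xs!l)" for l
  define f where "f l = v (xs!l) (xs!Suc l)" for l
  obtain x y where xy: "x\<in>A" "y\<in>A" "x\<noteq>y" "v x y \<noteq> 0" using nz by blast
  obtain i where i: "i<n" "x = xs!i" using getidx xy by blast
  obtain k where k: "k<n" "y = xs!k" using getidx xy by blast
  have "i \<noteq> k" using xy i k by auto
  have n2: "2 \<le> n" using i k \<open>i\<noteq>k\<close> by linarith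
  have xne: "xs \<noteq> []" "0 < n" using n2 by auto
  have x0A: "xs!0 \<in> A" using inA[of 0] n2 by fastforce
  have bf: "b l \<le> f l" "0 \<le> b l" "0 \<le> f l" if "Suc l < n" for l
    using c1[of l "Suc l"] nonneg[of "Suc l" l] nonneg[of l "Suc l"] that
    unfolding b_def f_def by auto
  have fpos: "\<exists>l. Suc l < n \<and> 0 < f l"
  proof (rule ccontr)
    assume "\<not> ?thesis"
    hence fz: "\<forall>l. Suc l < n \<longrightarrow> f l \<le> 0" using not_less by blast
    have "v x y \<le> 0"
    proof (cases "i < k")
      case True then show ?thesis using fwd_zero[of k i] fz i k unfolding f_def by auto
    next
      case False then have ki: "k < i" using \<open>i\<noteq>k\<close> by simp
      then have "v x y \<le> b k" using back_le[of k k i] i k unfolding b_def by auto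
      also have "\<dots> \<le> f k" using bf ki i by auto
      also have "\<dots> \<le> 0" using fz ki i by auto
      finally show ?thesis .
    qed
    moreover have "0 \<le> v x y" using nonneg[of i k] i k \<open>i\<noteq>k\<close> by simp
    ultimately show False using xy by simp
  qed
  define P where "P l \<longleftrightarrow> n \<le> Suc l \<or> b l = 0" for l
  define m where "m = (LEAST l. P l)"
  have Pn: "P (n - 1)" unfolding P_def using n2 by (intro disjI1) arith
  have mle: "m \<le> n - 1" unfolding m_def using Pn by (rule Least_le)
  have mn: "m < n" using mle n2 by simp
  have F2: "0 < b l" if "l < m" for l
  proof -
    have "\<not> P l" using that not_less_Least unfolding m_def by blast
    then have "Suc l < n" "b l \<noteq> 0" unfolding P_def by auto
    then show ?thesis using bf(2)[of l] by simp
  qed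
  have F3: "b m = 0" if "Suc m < n"
  proof -
    have "P m" unfolding m_def using Pn by (rule LeastI)
    then show ?thesis using that unfolding P_def by auto
  qed
  have F4: "0 < f m" if sm: "Suc m < n"
  proof (rule ccontr)
    assume "\<not> 0 < f m"
    then have fm: "f m = 0" using bf[OF sm] by simp
    have bm: "b m = 0" using F3[OF sm] .
    show False
    proof (cases m)
      case (Suc j)
      have bj: "0 < b j" using F2 Suc by simp
      have fj: "0 \<le> f j" using bf(3)[of j] Suc sm by simp
      have z: "xs!j \<in> A" "xs!j \<noteq> xs!m" "xs!j \<noteq> xs!Suc m" using inA idx_eq Suc sm by auto
      have "turnout v (xs!m) (xs!j) - turnout v (xs!Suc m) (xs!j) \<le> margin v (xs!m) (xs!Suc m)"
        using c4[OF sm z] by simp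
      moreover have "v (xs!j) (xs!Suc m) = max (f j) (f m)"
        using c2[of j m "Suc m"] Suc sm unfolding f_def by simp
      moreover have "v (xs!Suc m) (xs!j) = min (b m) (b j)"
        using c3[of j m "Suc m"] Suc sm unfolding b_def by simp
      moreover have "max (f j) (f m) = f j" using fm fj by simp
      moreover have "min (b m) (b j) = 0" using bm bj by simp
      moreover have "v (xs!m) (xs!j) = b j" "v (xs!j) (xs!m) = f j"
        using Suc unfolding b_def f_def by simp_all
      moreover have "v (xs!m) (xs!Suc m) = f m" "v (xs!Suc m) (xs!m) = b m"
        unfolding b_def f_def by simp_all
      ultimately show False using fm bm bj unfolding turnout_def margin_def by simp
    next
      case 0
      define l where "l = (LEAST l. Suc l < n \<and> 0 < f l)"
      have l: "Suc l < n" "0 < f l" unfolding l_def using LeastI_ex[OF fpos] by auto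
      have "l \<noteq> 0" using l fm 0 by (metis less_irrefl)
      then obtain j where j: "l = Suc j" using not0_implies_Suc by blast
      have "\<not> (Suc j < n \<and> 0 < f j)" using not_less_Least[of j "\<lambda>l. Suc l < n \<and> 0 < f l"] j unfolding l_def by simp
      then have fj: "f j = 0" using bf[of j] l j by simp
      have bj: "b j = 0" using bf[of j] l j fj by simp
      have bl: "0 \<le> b l" using bf l by simp
      have z: "xs!j \<in> A" "xs!j \<noteq> xs!l" "xs!j \<noteq> xs!Suc l" using inA idx_eq j l by auto
      have "0 \<le> turnout v (xs!l) (xs!j) - turnout v (xs!Suc l) (xs!j)"
        using c4[OF l(1) z] by simp
      moreover have "v (xs!j) (xs!Suc l) = max (f j) (f l)"
        using c2[of j l "Suc l"] j l unfolding f_def by simp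
      moreover have "v (xs!Suc l) (xs!j) = min (b l) (b j)"
        using c3[of j l "Suc l"] j l unfolding b_def by simp
      moreover have "max (f j) (f l) = f l" using fj l by simp
      moreover have "min (b l) (b j) = 0" using bj bl by simp
      moreover have "v (xs!l) (xs!j) = b j" "v (xs!j) (xs!l) = f j"
        using j unfolding b_def f_def by simp_all
      ultimately show False using l fj bj unfolding turnout_def by simp
    qed
  qed
  define X where "X = {xs!i | i. i \<le> m}"
  have memX: "xs!j \<in> X \<longleftrightarrow> j \<le> m" if "j < n" for j
  proof
    assume "xs!j \<in> X"
    then obtain i where "xs!j = xs!i" "i \<le> m" unfolding X_def by auto
    then show "j \<le> m" using idx_eq[of j i] mn that by simp
  qed (auto simp: X_def)
  have claim1: "0 < v (xs!i) (xs!k)" if "i \<le> m" "k < n" "k \<noteq> i" for i k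
  proof (cases "k < i")
    case True then show ?thesis using back_pos[of i k] F2 that mn unfolding b_def by auto
  next
    case False then have ki: "i < k" using that by simp
    have "0 < f i"
    proof (cases "i < m")
      case True then show ?thesis using F2[of i] bf[of i] mn by force
    next
      case False then have "i = m" using that by simp
      then show ?thesis using F4 ki that by simp
    qed
    then show ?thesis using fwd_ge[of i i k] ki that unfolding f_def by simp
  qed
  have pos_ind: "0 < indirect A v (xs!i) (xs!k)" if "i \<le> m" "k < n" "k \<noteq> i" for i k
  proof -
    have "v (xs!i) (xs!k) \<le> indirect A v (xs!i) (xs!k)"
      by (rule indirect_ge[OF fin]) (use inA idx_eq that mn in auto)
    then show ?thesis using claim1[OF that] by simp
  qed
  have claim0: "indirect A v (xs!k) (xs!q) = 0" if "m < k" "k < n" "q \<le> m" for k q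
  proof (rule indirect_zero[OF fin ll])
    show "xs!k \<in> A" "xs!q \<in> A" using inA that mn by auto
    show "xs!k \<noteq> xs!q" using idx_eq that mn by auto
    fix ps assume ps: "is_path A (xs!k) (xs!q) ps"
    let ?Q = "\<lambda>w. m < idx w"
    have ne: "ps \<noteq> []" using ps by (auto simp: is_path_def)
    have h: "?Q (hd ps)" using ps that by (auto simp: is_path_def idx_nth)
    have lq: "\<not> ?Q (last ps)" using ps that mn by (auto simp: is_path_def idx_nth)
    obtain i where i: "Suc i < length ps" "?Q (ps!i)" "\<not> ?Q (ps!Suc i)"
      using cross[OF ne, of ?Q] h lq by auto
    have "ps!i \<in> set ps" "ps!Suc i \<in> set ps" using i by auto
    then have inps: "ps!i \<in> A" "ps!Suc i \<in> A" using ps by (auto simp: is_path_def)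
    define p where "p = idx (ps!i)"
    define q' where "q' = idx (ps!Suc i)"
    have pq: "p < n" "q' < n" using inps idx_in unfolding p_def q'_def by auto
    have eqs: "xs!p = ps!i" "xs!q' = ps!Suc i" using inps idx_in unfolding p_def q'_def by auto
    have mpq: "m < p" "q' \<le> m" using i p_def q'_def by auto
    have "path_value v ps \<le> v (ps!i) (ps!Suc i)" using path_value_le[OF ps i(1)] .
    also have "\<dots> = v (xs!p) (xs!q')" using eqs by simp
    also have "\<dots> \<le> b m" using back_le[of q' m p] mpq pq unfolding b_def by simp
    also have "\<dots> = 0" using F3 mpq pq by simp
    finally show "path_value v ps \<le> 0" .
  qed
  have a0: "xs!0 \<in> X" using memX[of 0] n2 by fastforce
  have irr: "irr_component A v X"
    unfolding irr_component_def
  proof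
    show "xs!0 \<in> A" using inA[of 0] n2 by fastforce
    show "X = {y\<in>A. irr_equiv A v (xs!0) y}"
    proof (intro set_eqI iffI)
      fix y assume "y \<in> X"
      then obtain j where j: "y = xs!j" "j \<le> m" unfolding X_def by auto
      show "y \<in> {y\<in>A. irr_equiv A v (xs!0) y}"
      proof (cases "j = 0")
        case True then show ?thesis using j x0A by (auto simp: irr_equiv_def)
      next
        case False
        then show ?thesis using pos_ind[of 0 j] pos_ind[of j 0] j inA mn xne
          by (auto simp: irr_equiv_def)
      qed
    next
      fix y assume "y \<in> {y\<in>A. irr_equiv A v (xs!0) y}"
      then have y: "y \<in> A" "irr_equiv A v (xs!0) y" by auto
      obtain k where k: "k < n" "y = xs!k" using getidx y by blast
      show "y \<in> X"
      proof (rule ccontr)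
        assume "y \<notin> X" then have mk: "m < k" using memX k by auto
        then have "indirect A v (xs!k) (xs!0) = 0" using claim0 k by auto
        moreover have "xs!0 \<noteq> xs!k" using idx_eq[of 0 k] mk k xne by auto
        ultimately show False using y k by (auto simp: irr_equiv_def)
      qed
    qed
  qed
  have top: "top_dominant_component A v X"
    unfolding top_dominant_component_def
  proof (intro conjI allI impI irr)
    fix D assume D: "irr_component A v D \<and> D \<noteq> X"
    then obtain x where x: "x \<in> A" "D = {y\<in>A. irr_equiv A v x y}"
      unfolding irr_component_def by blast
    obtain k where k: "k < n" "x = xs!k" using getidx x by blast
    have mk: "m < k"
    proof (rule ccontr)
      assume "\<not> m < k" hence km: "k \<le> m" by simp
      have "D = X"
      proof (intro set_eqI)
        fix y
        show "y \<in> D \<longleftrightarrow> y \<in> X"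
        proof (cases "y \<in> A")
          case False then show ?thesis using x inA mn unfolding X_def by auto
        next
          case True
          obtain j where j: "j < n" "y = xs!j" using getidx True by blast
          show ?thesis
          proof (cases "j \<le> m")
            case True
            have "irr_equiv A v x y" using pos_ind[of k j] pos_ind[of j k] km True j k
              by (auto simp: irr_equiv_def)
            then show ?thesis using x memX j True \<open>y\<in>A\<close> by auto
          next
            case False
            have "indirect A v y x = 0" using claim0[of j k] False j k km by simp
            moreover have "x \<noteq> y" using idx_eq j k False km by auto
            ultimately have "\<not> irr_equiv A v x y" by (auto simp: irr_equiv_def)
            then show ?thesis using x memX j False by auto
          qed
        qed
      qed
      then show False using D by simp
    qed
    have "dominates A v (xs!0) x"
      using pos_ind[of 0 k] claim0[of k 0] mk k unfolding dominates_def by simp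
    moreover have "x \<in> D" using x by (simp add: irr_equiv_def)
    ultimately show "comp_dominates A v X D"
      unfolding comp_dominates_def using a0 by blast
  qed
  have "\<forall>x\<in>X. \<forall>y\<in>A. y \<noteq> x \<longrightarrow> v x y > 0"
  proof (intro ballI impI)
    fix x y assume "x \<in> X" "y \<in> A" "y \<noteq> x"
    then obtain i where i: "x = xs!i" "i \<le> m" unfolding X_def by auto
    obtain k where k: "k < n" "y = xs!k" using getidx \<open>y\<in>A\<close> by blast
    show "v x y > 0" using claim1[of i k] i k \<open>y \<noteq> x\<close> by auto
  qed
  then show ?thesis using top by blast
qed

end

theorem proposition3p3:
  fixes A :: "'a set" and v :: "'a \<Rightarrow> 'a \<Rightarrow> real"
  assumes "finite A"
    and "llull_matrix A v"
    and "has_CLC A v"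
    and "\<exists>x\<in>A. \<exists>y\<in>A. x \<noteq> y \<and> v x y \<noteq> 0"
  shows "\<exists>X. top_dominant_component A v X \<and> (\<forall>x\<in>X. \<forall>y\<in>A. y \<noteq> x \<longrightarrow> v x y > 0)"
proof -
  obtain xs where "clc_order A v xs" using assms(3) unfolding has_CLC_def by blast
  then interpret clc_setup A v xs using assms by unfold_locales
  show ?thesis using main[OF assms(4)] .
qed

end
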